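(* Let $(X,\Sigma,\mu)$ be a measure space, $n\ge1$, $\mathbb{F}\in\{\mathbb{R},\mathbb{C}\}$, and $h\in L^2(X,\mu;\mathbb{F})$ with $h\neq0$. Define $T:L^2(X,\mu;\mathbb{F}^n)\to\mathbb{F}^n$ by $T(F)=\int_X h(x)f_x\,d\mu(x)$ for $F=(f_x)_{x\in X}$ (integral taken coordinatewise). Let $d\in\mathbb{F}^n$ and assume $\dim L^2(X,\mu;\mathbb{F})\ge n$ if $d\ne0$, and $\dim L^2(X,\mu;\mathbb{F})\ge n+1$ if $d=0$. Then $T^{-1}(\{d\})$ contains a continuous frame $\Phi\in\mathcal{F}^{\mathbb{F}}_{(X,\mu),n}$.
   Context: A family $\Phi=(\varphi_x)_{x\in X}$ in $\mathbb{F}^n$ (with measurable coordinates) is a continuous frame indexed by $(X,\mu)$ if there are $0<A\le B$ with $A\|v\|^2\le\int_X|\langle v,\varphi_x\rangle|^2d\mu(x)\le B\|v\|^2$ for all $v\in\mathbb{F}^n$. $\mathcal{F}^{\mathbb{F}}_{(X,\mu),n}$ denotes the set of such frames, viewed as a subset of $L^2(X,\mu;\mathbb{F}^n)$. (Recall: a family in $\mathbb{F}^n$ is a continuous frame iff it lies in $L^2(X,\mu;\mathbb{F}^n)$ and its coordinate functions $\Phi^k=(\varphi^k_x)_{x\in X}$, $k=1,\dots,n$, are linearly independent in $L^2(X,\mu;\mathbb{F})$.) *)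

theory Defs
  imports "HOL-Analysis.Analysis"
begin

definition square_integrable :: "'a measure \<Rightarrow> ('a \<Rightarrow> 'f::real_normed_vector) \<Rightarrow> bool" where
  "square_integrable M f \<longleftrightarrow>
     f \<in> borel_measurable M \<and> (\<integral>\<^sup>+ x. ennreal ((norm (f x))\<^sup>2) \<partial>M) < \<infinity>"

text \<open>dim L^2(X,mu;F) >= n: there are n elements of L^2 that are linearly independent
  modulo equality almost everywhere.\<close>
definition L2_dim_ge :: "'a measure \<Rightarrow> 'f::real_normed_field itself \<Rightarrow> nat \<Rightarrow> bool" where
  "L2_dim_ge M _ n \<longleftrightarrow>
     (\<exists>g :: nat \<Rightarrow> 'a \<Rightarrow> 'f. (\<forall>i<n. square_integrable M (g i)) \<and>
        (\<forall>c :: nat \<Rightarrow> 'f. (AE x in M. (\<Sum>i<n. c i * g i x) = 0) \<longrightarrow> (\<forall>i<n. c i = 0)))"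

text \<open>Inner product on F^n, <v,w> = sum_k v_k * cj(w_k), with cj the conjugation of F
  (identity for the reals, cnj for the complex numbers).\<close>
definition vinner :: "('f \<Rightarrow> 'f) \<Rightarrow> 'f::real_normed_field ^ 'n \<Rightarrow> 'f ^ 'n \<Rightarrow> 'f" where
  "vinner cj v w = (\<Sum>k\<in>UNIV. v $ k * cj (w $ k))"

definition cont_frame :: "('f \<Rightarrow> 'f) \<Rightarrow> 'a measure \<Rightarrow> ('a \<Rightarrow> 'f::real_normed_field ^ 'n) \<Rightarrow> bool" where
  "cont_frame cj M \<Phi> \<longleftrightarrow>
     (\<forall>k. (\<lambda>x. \<Phi> x $ k) \<in> borel_measurable M) \<and>
     (\<exists>A B::real. 0 < A \<and> A \<le> B \<and>
        (\<forall>v. ennreal (A * (norm v)\<^sup>2) \<le> (\<integral>\<^sup>+ x. ennreal ((norm (vinner cj v (\<Phi> x)))\<^sup>2) \<partial>M) \<and>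
             (\<integral>\<^sup>+ x. ennreal ((norm (vinner cj v (\<Phi> x)))\<^sup>2) \<partial>M) \<le> ennreal (B * (norm v)\<^sup>2)))"

definition synth_op :: "'a measure \<Rightarrow> ('a \<Rightarrow> 'f::{real_normed_field,banach,second_countable_topology})
    \<Rightarrow> ('a \<Rightarrow> 'f ^ 'n) \<Rightarrow> 'f ^ 'n" where
  "synth_op M h F = (\<chi> k. integral\<^sup>L M (\<lambda>x. h x * F x $ k))"

end

theory Submission
  imports Defs
begin

lemma sq_sum_le: "((a::real)+b)\<^sup>2 \<le> 2*a\<^sup>2 + 2*b\<^sup>2"
proof -
  have "0 \<le> (a-b)\<^sup>2" by simp
  then show ?thesis by (simp add: power2_eq_square algebra_simps)
qed

lemma prod_le_sq: "(a::real) * b \<le> a\<^sup>2 + b\<^sup>2"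
proof -
  have "0 \<le> (a-b)\<^sup>2" by simp
  then have h1: "2 * (a * b) \<le> a * a + b * b" by (simp add: power2_eq_square algebra_simps)
  have h2: "0 \<le> a * a + b * b" by simp
  show ?thesis unfolding power2_eq_square using h1 h2 by linarith
qed

lemma si_iff: "square_integrable M f \<longleftrightarrow> f \<in> borel_measurable M \<and> integrable M (\<lambda>x. (norm (f x))\<^sup>2)"
proof -
  have "f \<in> borel_measurable M \<Longrightarrow> (\<lambda>x. (norm (f x))\<^sup>2) \<in> borel_measurable M" by measurable
  then show ?thesis unfolding square_integrable_def integrable_iff_bounded by auto
qed

lemma si_meas: "square_integrable M f \<Longrightarrow> f \<in> borel_measurable M"
  by (simp add: si_iff)

lemma si_int: "square_integrable M f \<Longrightarrow> integrable M (\<lambda>x. (norm (f x))\<^sup>2)"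
  by (simp add: si_iff)

lemma si_add:
  fixes f g :: "'a \<Rightarrow> 'f::{real_normed_field,euclidean_space}"
  assumes "square_integrable M f" "square_integrable M g"
  shows "square_integrable M (\<lambda>x. f x + g x)"
proof -
  have m: "(\<lambda>x. f x + g x) \<in> borel_measurable M" using si_meas[OF assms(1)] si_meas[OF assms(2)] by measurable
  have i: "integrable M (\<lambda>x. 2 * (norm (f x))\<^sup>2 + 2 * (norm (g x))\<^sup>2)"
    using si_int[OF assms(1)] si_int[OF assms(2)] by simp
  have "integrable M (\<lambda>x. (norm (f x + g x))\<^sup>2)"
  proof (rule Bochner_Integration.integrable_bound[OF i])
    show "(\<lambda>x. (norm (f x + g x))\<^sup>2) \<in> borel_measurable M" using m by measurable
    show "AE x in M. norm ((norm (f x + g x))\<^sup>2) \<le> norm (2 * (norm (f x))\<^sup>2 + 2 * (norm (g x))\<^sup>2)"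
    proof (rule AE_I2)
      fix x
      have a: "norm (f x + g x) \<le> norm (f x) + norm (g x)" by (rule norm_triangle_ineq)
      have "(norm (f x + g x))\<^sup>2 \<le> (norm (f x) + norm (g x))\<^sup>2"
        using a by (simp add: power_mono)
      also have "\<dots> \<le> 2 * (norm (f x))\<^sup>2 + 2 * (norm (g x))\<^sup>2"
        by (rule sq_sum_le)
      finally show "norm ((norm (f x + g x))\<^sup>2) \<le> norm (2 * (norm (f x))\<^sup>2 + 2 * (norm (g x))\<^sup>2)"
        by simp
    qed
  qed
  then show ?thesis using m by (simp add: si_iff)
qed

lemma si_cmult:
  fixes f :: "'a \<Rightarrow> 'f::{real_normed_field,euclidean_space}"
  assumes "square_integrable M f"
  shows "square_integrable M (\<lambda>x. c * f x)"
proof -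
  have "integrable M (\<lambda>x. (norm c)\<^sup>2 * (norm (f x))\<^sup>2)"
    by (intro integrable_mult_right si_int assms)
  moreover have "(\<lambda>x. (norm (c * f x))\<^sup>2) = (\<lambda>x. (norm c)\<^sup>2 * (norm (f x))\<^sup>2)"
    by (simp add: norm_mult power_mult_distrib)
  moreover have "(\<lambda>x. c * f x) \<in> borel_measurable M" using si_meas[OF assms] by measurable
  ultimately show ?thesis by (simp add: si_iff)
qed

lemma si_zero: "square_integrable M (\<lambda>x. 0::'f::{real_normed_field,euclidean_space})"
  by (simp add: si_iff)

lemma si_sum:
  fixes f :: "'i \<Rightarrow> 'a \<Rightarrow> 'f::{real_normed_field,euclidean_space}"
  assumes "\<And>i. i \<in> S \<Longrightarrow> square_integrable M (f i)"
  shows "square_integrable M (\<lambda>x. \<Sum>i\<in>S. f i x)"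
  using assms
proof (induction S rule: infinite_finite_induct)
  case (infinite A) then show ?case by (simp add: si_zero)
next
  case empty then show ?case by (simp add: si_zero)
next
  case (insert a A) then show ?case by (simp add: si_add)
qed

lemma si_prod_int:
  fixes f g :: "'a \<Rightarrow> 'f::{real_normed_field,euclidean_space}"
  assumes "square_integrable M f" "square_integrable M g"
  shows "integrable M (\<lambda>x. f x * g x)"
proof -
  have i: "integrable M (\<lambda>x. (norm (f x))\<^sup>2 + (norm (g x))\<^sup>2)"
    using si_int[OF assms(1)] si_int[OF assms(2)] by simp
  show ?thesis
  proof (rule Bochner_Integration.integrable_bound[OF i])
    show "(\<lambda>x. f x * g x) \<in> borel_measurable M" using si_meas[OF assms(1)] si_meas[OF assms(2)] by measurable
    show "AE x in M. norm (f x * g x) \<le> norm ((norm (f x))\<^sup>2 + (norm (g x))\<^sup>2)"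
    proof (rule AE_I2)
      fix x
      have "norm (f x) * norm (g x) \<le> (norm (f x))\<^sup>2 + (norm (g x))\<^sup>2"
        by (rule prod_le_sq)
      then show "norm (f x * g x) \<le> norm ((norm (f x))\<^sup>2 + (norm (g x))\<^sup>2)"
        by (simp add: norm_mult)
    qed
  qed
qed

definition indep_ae :: "'a measure \<Rightarrow> nat \<Rightarrow> (nat \<Rightarrow> 'a \<Rightarrow> 'f::real_normed_field) \<Rightarrow> bool" where
  "indep_ae M n g \<longleftrightarrow> (\<forall>c. (AE x in M. (\<Sum>i<n. c i * g i x) = 0) \<longrightarrow> (\<forall>i<n. c i = 0))"

lemma ell_comb:
  fixes h a b :: "'a \<Rightarrow> 'f::{real_normed_field,euclidean_space}"
  assumes "square_integrable M h" "square_integrable M a" "square_integrable M b"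
  shows "(\<integral>x. h x * (a x + c * b x) \<partial>M) = (\<integral>x. h x * a x \<partial>M) + c * (\<integral>x. h x * b x \<partial>M)"
proof -
  have e: "h x * (a x + c * b x) = h x * a x + c * (h x * b x)" for x by (simp add: algebra_simps)
  have i1: "integrable M (\<lambda>x. h x * a x)" by (rule si_prod_int[OF assms(1,2)])
  have i2: "integrable M (\<lambda>x. c * (h x * b x))" using si_prod_int[OF assms(1,3)] by simp
  show ?thesis unfolding e by (simp add: Bochner_Integration.integral_add[OF i1 i2])
qed

lemma ell_sum:
  fixes h :: "'a \<Rightarrow> 'f::{real_normed_field,euclidean_space}" and g :: "'i \<Rightarrow> 'a \<Rightarrow> 'f"
  assumes "square_integrable M h" "\<And>i. i \<in> S \<Longrightarrow> square_integrable M (g i)"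
  shows "(\<integral>x. h x * (\<Sum>i\<in>S. c i * g i x) \<partial>M) = (\<Sum>i\<in>S. c i * (\<integral>x. h x * g i x \<partial>M))"
proof -
  have e: "h x * (\<Sum>i\<in>S. c i * g i x) = (\<Sum>i\<in>S. c i * (h x * g i x))" for x
    by (simp add: sum_distrib_left algebra_simps)
  have i: "integrable M (\<lambda>x. c i * (h x * g i x))" if "i \<in> S" for i
    using si_prod_int[OF assms(1) assms(2)[OF that]] by simp
  show ?thesis unfolding e by (simp add: Bochner_Integration.integral_sum[OF i])
qed

lemma constrA:
  fixes h :: "'a \<Rightarrow> 'f::{real_normed_field,euclidean_space}" and g :: "nat \<Rightarrow> 'a \<Rightarrow> 'f"
  assumes sih: "square_integrable M h"
    and sig: "\<And>i. i < n \<Longrightarrow> square_integrable M (g i)"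
    and ind: "indep_ae M n g"
    and p: "p < n" and Lp: "(\<integral>x. h x * g p x \<partial>M) \<noteq> 0" and dp: "d p \<noteq> 0"
  shows "\<exists>f. (\<forall>i<n. square_integrable M (f i)) \<and> indep_ae M n f \<and>
             (\<forall>i<n. (\<integral>x. h x * f i x \<partial>M) = d i)"
proof -
  define ell where "ell i = (\<integral>x. h x * g i x \<partial>M)" for i
  define L where "L = ell p"
  have L: "L \<noteq> 0" using Lp unfolding L_def ell_def .
  define a where "a i = (d i - ell i) / L" for i
  define f where "f i x = g i x + a i * g p x" for i x
  have sif: "square_integrable M (f i)" if "i < n" for i
    unfolding f_def by (intro si_add si_cmult sig that p)
  have lf: "(\<integral>x. h x * f i x \<partial>M) = d i" if "i < n" for i
    unfolding f_def ell_comb[OF sih sig[OF that] sig[OF p]]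
    using L by (simp add: ell_def[symmetric] L_def[symmetric] a_def field_simps)
  have indf: "indep_ae M n f" unfolding indep_ae_def
  proof (rule allI, rule impI)
    fix c assume ae: "AE x in M. (\<Sum>i<n. c i * f i x) = 0"
    define C where "C = (\<Sum>i<n. c i * a i)"
    define b where "b k = c k + (if k = p then C else 0)" for k
    have eq: "(\<Sum>i<n. c i * f i x) = (\<Sum>k<n. b k * g k x)" for x
    proof -
      have "(\<Sum>i<n. c i * f i x) = (\<Sum>i<n. c i * g i x) + C * g p x"
        unfolding f_def C_def by (simp add: distrib_left sum.distrib sum_distrib_right mult.assoc)
      also have "\<dots> = (\<Sum>k<n. c k * g k x + (if k = p then C * g k x else 0))"
        using p by (simp add: sum.distrib)
      also have "\<dots> = (\<Sum>k<n. b k * g k x)"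
        by (rule sum.cong) (simp_all add: b_def distrib_right)
      finally show ?thesis .
    qed
    have b0: "\<forall>k<n. b k = 0"
      using ind ae unfolding indep_ae_def eq by blast
    have ck: "c k = 0" if "k < n" "k \<noteq> p" for k
      using b0 that unfolding b_def by auto
    have "C = (\<Sum>i<n. if i = p then c p * a p else 0)"
      unfolding C_def by (rule sum.cong) (auto simp: ck)
    then have C: "C = c p * a p" using p by simp
    have "b p = 0" using b0 p by blast
    then have "c p * (1 + a p) = 0" unfolding b_def C by (simp add: algebra_simps)
    moreover have "1 + a p = d p / L" unfolding a_def L_def using L by (simp add: L_def field_simps)
    ultimately have "c p = 0" using dp L by simp
    then show "\<forall>i<n. c i = 0" using ck by blast
  qed
  show ?thesis using sif indf lf by blast
qed

lemma indep_perm: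
  assumes "bij_betw \<tau> {..<n} {..<n}" "indep_ae M n g"
  shows "indep_ae M n (\<lambda>i. g (\<tau> i))"
  unfolding indep_ae_def
proof (rule allI, rule impI)
  fix c assume ae: "AE x in M. (\<Sum>i<n. c i * g (\<tau> i) x) = 0"
  define \<sigma> where "\<sigma> = the_inv_into {..<n} \<tau>"
  have s1: "\<sigma> (\<tau> i) = i" if "i < n" for i
    unfolding \<sigma>_def using assms(1) that by (simp add: bij_betw_def the_inv_into_f_f)
  have "(\<Sum>i<n. c i * g (\<tau> i) x) = (\<Sum>k<n. c (\<sigma> k) * g k x)" for x
  proof -
    have "(\<Sum>k<n. c (\<sigma> k) * g k x) = (\<Sum>i<n. c (\<sigma> (\<tau> i)) * g (\<tau> i) x)"
      using sum.reindex_bij_betw[OF assms(1), of "\<lambda>k. c (\<sigma> k) * g k x"] by simp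
    also have "\<dots> = (\<Sum>i<n. c i * g (\<tau> i) x)" by (rule sum.cong) (simp_all add: s1)
    finally show ?thesis by simp
  qed
  then have "\<forall>k<n. c (\<sigma> k) = 0" using assms(2) ae unfolding indep_ae_def by auto
  moreover have "\<tau> i < n" if "i < n" for i using assms(1) that by (auto simp: bij_betw_def)
  ultimately show "\<forall>i<n. c i = 0" using s1 by metis
qed

lemma constrB:
  fixes h :: "'a \<Rightarrow> 'f::{real_normed_field,euclidean_space}" and g :: "nat \<Rightarrow> 'a \<Rightarrow> 'f"
  assumes sih: "square_integrable M h"
    and sig: "\<And>i. i < Suc n \<Longrightarrow> square_integrable M (g i)"
    and ind: "indep_ae M (Suc n) g"
    and piv: "(\<integral>x. h x * g n x \<partial>M) = 0 \<Longrightarrow> (\<forall>i<Suc n. (\<integral>x. h x * g i x \<partial>M) = 0)"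
  shows "\<exists>f. (\<forall>i<n. square_integrable M (f i)) \<and> indep_ae M n f \<and>
             (\<forall>i<n. (\<integral>x. h x * f i x \<partial>M) = 0)"
proof -
  define ell where "ell i = (\<integral>x. h x * g i x \<partial>M)" for i
  define L where "L = ell n"
  define a where "a i = - (ell i / L)" for i
  define f where "f i x = g i x + a i * g n x" for i x
  have sif: "square_integrable M (f i)" if "i < n" for i
    unfolding f_def using that by (intro si_add si_cmult sig) auto
  have lf: "(\<integral>x. h x * f i x \<partial>M) = 0" if "i < n" for i
  proof -
    have "(\<integral>x. h x * f i x \<partial>M) = ell i + a i * L"
      using that by (simp add: f_def ell_comb[OF sih sig[of i] sig[of n]] ell_def L_def)
    also have "\<dots> = 0"
    proof (cases "L = 0")
      case True then have "ell i = 0" using piv that unfolding L_def ell_def by auto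
      then show ?thesis by (simp add: a_def)
    next
      case False then show ?thesis by (simp add: a_def)
    qed
    finally show ?thesis .
  qed
  have indf: "indep_ae M n f" unfolding indep_ae_def
  proof (rule allI, rule impI)
    fix c assume ae: "AE x in M. (\<Sum>i<n. c i * f i x) = 0"
    define C where "C = (\<Sum>i<n. c i * a i)"
    define b where "b k = (if k = n then C else c k)" for k
    have eq: "(\<Sum>i<n. c i * f i x) = (\<Sum>k<Suc n. b k * g k x)" for x
    proof -
      have "(\<Sum>i<n. c i * f i x) = (\<Sum>i<n. c i * g i x) + C * g n x"
        unfolding f_def C_def by (simp add: distrib_left sum.distrib sum_distrib_right mult.assoc)
      also have "\<dots> = (\<Sum>k<Suc n. b k * g k x)"
        unfolding b_def by simp
      finally show ?thesis .
    qed
    have b0: "\<forall>k<Suc n. b k = 0"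
      using ind ae unfolding indep_ae_def eq by blast
    show "\<forall>i<n. c i = 0"
    proof (intro allI impI)
      fix i assume "i < n"
      then have "b i = 0" using b0 by simp
      then show "c i = 0" using \<open>i < n\<close> unfolding b_def by simp
    qed
  qed
  show ?thesis using sif indf lf by blast
qed

locale conjf =
  fixes cj :: "'f::{real_normed_field,euclidean_space} \<Rightarrow> 'f"
  assumes cj_add: "cj (a + b) = cj a + cj b"
    and cj_mult: "cj (a * b) = cj a * cj b"
    and cj_cj: "cj (cj a) = a"
    and cj_norm: "norm (cj a) = norm a"
    and cj_scaleR: "cj (scaleR r a) = scaleR r (cj a)"
    and cj_self: "a * cj a = of_real ((norm a)\<^sup>2)"
begin

lemma cj_bl: "bounded_linear cj"
  by (rule bounded_linear_intro[where K=1]) (simp_all add: cj_add cj_scaleR cj_norm)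

lemma cj_cont[continuous_intros]: "continuous_on S f \<Longrightarrow> continuous_on S (\<lambda>x. cj (f x))"
  using bounded_linear.continuous_on[OF cj_bl] by blast

lemma cj_meas[measurable]: "f \<in> borel_measurable M \<Longrightarrow> (\<lambda>x. cj (f x)) \<in> borel_measurable M"
  by (rule measurable_compose[OF _ borel_measurable_continuous_onI]) (auto intro: cj_cont continuous_on_id)

lemma cj_zero[simp]: "cj 0 = 0"
  using cj_scaleR[of 0 0] by simp

lemma cj_sum: "cj (\<Sum>i\<in>S. f i) = (\<Sum>i\<in>S. cj (f i))"
  by (induction S rule: infinite_finite_induct) (simp_all add: cj_add)

lemma si_cj: "square_integrable M f \<Longrightarrow> square_integrable M (\<lambda>x. cj (f x))"
  by (simp add: si_iff cj_norm cj_meas)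

lemma frame:
  fixes \<Phi> :: "'a \<Rightarrow> 'f^'n::finite"
  assumes si: "\<And>k. square_integrable M (\<lambda>x. \<Phi> x $ k)"
    and ind: "\<And>c::'f^'n. (AE x in M. (\<Sum>k\<in>UNIV. c$k * \<Phi> x $ k) = 0) \<Longrightarrow> c = 0"
  shows "cont_frame cj M \<Phi>"
proof -
  define S where "S a x = (\<Sum>k\<in>UNIV. a$k * \<Phi> x $ k)" for a x
  define q where "q a = (\<integral>x. (norm (S a x))\<^sup>2 \<partial>M)" for a
  define G where "G k l = (\<integral>x. \<Phi> x $ k * cj (\<Phi> x $ l) \<partial>M)" for k l
  have siS: "square_integrable M (S a)" for a
    unfolding S_def by (intro si_sum si_cmult si)
  have intS: "integrable M (\<lambda>x. (norm (S a x))\<^sup>2)" for a using siS si_int by blast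
  have q_nn: "0 \<le> q a" for a unfolding q_def by simp
  have ii: "integrable M (\<lambda>x. \<Phi> x $ k * cj (\<Phi> x $ l))" for k l
    by (intro si_prod_int si si_cj)
  have qP: "(of_real (q a) :: 'f) = (\<Sum>k\<in>UNIV. \<Sum>l\<in>UNIV. a$k * cj (a$l) * G k l)" for a
  proof -
    have "(of_real (q a) :: 'f) = (\<integral>x. of_real ((norm (S a x))\<^sup>2) \<partial>M)"
      unfolding q_def by (rule integral_of_real[symmetric]) (rule intS)
    also have "\<dots> = (\<integral>x. S a x * cj (S a x) \<partial>M)" by (simp add: cj_self)
    also have "\<dots> = (\<integral>x. (\<Sum>k\<in>UNIV. \<Sum>l\<in>UNIV. a$k * cj (a$l) * (\<Phi> x $ k * cj (\<Phi> x $ l))) \<partial>M)"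
      by (simp add: S_def cj_sum cj_mult sum_product mult_ac)
    also have "\<dots> = (\<Sum>k\<in>UNIV. \<Sum>l\<in>UNIV. a$k * cj (a$l) * G k l)"
      by (simp add: G_def integral_sum integrable_sum ii)
    finally show ?thesis .
  qed
  have q_eq: "q a = norm (\<Sum>k\<in>UNIV. \<Sum>l\<in>UNIV. a$k * cj (a$l) * G k l)" for a
    using qP[of a, symmetric] q_nn[of a] by simp
  have q_cont: "continuous_on UNIV q"
    unfolding q_eq by (intro continuous_intros)
  have q_hom: "q (r *\<^sub>R a) = r\<^sup>2 * q a" for r a
  proof -
    have "S (r *\<^sub>R a) x = r *\<^sub>R S a x" for x
      by (simp add: S_def scaleR_sum_right)
    then have "(norm (S (r *\<^sub>R a) x))\<^sup>2 = r\<^sup>2 * (norm (S a x))\<^sup>2" for x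
      by (simp add: power_mult_distrib)
    then show ?thesis unfolding q_def by simp
  qed
  have q_pos: "0 < q a" if "a \<noteq> 0" for a
  proof (rule ccontr)
    assume "\<not> 0 < q a"
    then have "q a = 0" using q_nn[of a] by simp
    then have "AE x in M. (norm (S a x))\<^sup>2 = 0"
      unfolding q_def using integral_nonneg_eq_0_iff_AE[OF intS] by simp
    then have "AE x in M. S a x = 0" by simp
    then have "a = 0" unfolding S_def by (rule ind)
    then show False using that by simp
  qed
  have q0: "q 0 = 0" unfolding q_def S_def by simp
  define Sp where "Sp = sphere (0::'f^'n) 1"
  have cSp: "compact Sp" unfolding Sp_def by simp
  have neSp: "Sp \<noteq> {}" unfolding Sp_def using norm_axis_1[of undefined] by auto
  obtain a0 where a0: "a0 \<in> Sp" "\<And>y. y \<in> Sp \<Longrightarrow> q a0 \<le> q y"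
    using continuous_attains_inf[OF cSp neSp continuous_on_subset[OF q_cont]] by blast
  obtain a1 where a1: "a1 \<in> Sp" "\<And>y. y \<in> Sp \<Longrightarrow> q y \<le> q a1"
    using continuous_attains_sup[OF cSp neSp continuous_on_subset[OF q_cont]] by blast
  have bounds: "q a0 * (norm w)\<^sup>2 \<le> q w \<and> q w \<le> q a1 * (norm w)\<^sup>2" for w
  proof (cases "w = 0")
    case True then show ?thesis by (simp add: q0)
  next
    case False
    define u where "u = (1 / norm w) *\<^sub>R w"
    have u: "u \<in> Sp" unfolding u_def Sp_def using False by simp
    have "w = norm w *\<^sub>R u" unfolding u_def using False by simp
    then have "q w = (norm w)\<^sup>2 * q u" using q_hom by metis
    then show ?thesis using a0(2)[OF u] a1(2)[OF u]
      by (simp add: mult.commute mult_right_mono)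
  qed
  have "a0 \<noteq> 0" using a0(1) unfolding Sp_def by auto
  then have A_pos: "0 < q a0" by (rule q_pos)
  have AB: "q a0 \<le> q a1" using a1(2)[OF a0(1)] .
  have key: "(\<integral>\<^sup>+ x. ennreal ((norm (vinner cj v (\<Phi> x)))\<^sup>2) \<partial>M) = ennreal (q (\<chi> k. cj (v $ k)))
         \<and> norm (\<chi> k. cj (v $ k)) = norm v" for v
  proof
    define w where "w = (\<chi> k. cj (v $ k))"
    have "vinner cj v (\<Phi> x) = cj (S w x)" for x
      unfolding vinner_def S_def w_def by (simp add: cj_sum cj_mult cj_cj)
    then have "(\<integral>\<^sup>+ x. ennreal ((norm (vinner cj v (\<Phi> x)))\<^sup>2) \<partial>M)
        = (\<integral>\<^sup>+ x. ennreal ((norm (S w x))\<^sup>2) \<partial>M)" by (simp add: cj_norm)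
    also have "\<dots> = ennreal (q w)" unfolding q_def
      by (rule nn_integral_eq_integral[OF intS]) simp
    finally show "(\<integral>\<^sup>+ x. ennreal ((norm (vinner cj v (\<Phi> x)))\<^sup>2) \<partial>M) = ennreal (q (\<chi> k. cj (v $ k)))"
      unfolding w_def .
    show "norm (\<chi> k. cj (v $ k)) = norm v" by (simp add: norm_vec_def cj_norm)
  qed
  have lo: "ennreal (q a0 * (norm v)\<^sup>2) \<le> (\<integral>\<^sup>+ x. ennreal ((norm (vinner cj v (\<Phi> x)))\<^sup>2) \<partial>M)" for v
    using key[of v] bounds[of "\<chi> k. cj (v $ k)"] by (simp add: ennreal_leI)
  have hi: "(\<integral>\<^sup>+ x. ennreal ((norm (vinner cj v (\<Phi> x)))\<^sup>2) \<partial>M) \<le> ennreal (q a1 * (norm v)\<^sup>2)" for v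
    using key[of v] bounds[of "\<chi> k. cj (v $ k)"] by (simp add: ennreal_leI)
  have ms: "(\<lambda>x. \<Phi> x $ k) \<in> borel_measurable M" for k using si si_meas by blast
  show ?thesis unfolding cont_frame_def
    using ms A_pos AB lo hi by blast
qed

lemma swap_bij:
  assumes "j < n" "p < n"
  shows "bij_betw (\<lambda>i. if i = j then p else if i = p then j else i) {..<n} {..<n}"
  by (rule bij_betw_byWitness[where f'="\<lambda>i. if i = j then p else if i = p then j else i"])
     (use assms in auto)

lemma main:
  fixes h :: "'a \<Rightarrow> 'f" and d :: "'f^'n::finite"
  assumes sih: "square_integrable M h" and hn: "\<not> (AE x in M. h x = 0)"
    and dne: "d \<noteq> 0 \<longrightarrow> L2_dim_ge M TYPE('f) CARD('n)"
    and d0: "d = 0 \<longrightarrow> L2_dim_ge M TYPE('f) (CARD('n) + 1)"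
  shows "\<exists>\<Phi>::'a \<Rightarrow> 'f^'n. cont_frame cj M \<Phi> \<and> synth_op M h \<Phi> = d"
proof -
  define n where "n = CARD('n)"
  obtain e :: "'n \<Rightarrow> nat" where e: "bij_betw e UNIV {..<n}"
    using ex_bij_betw_finite_nat[of "UNIV::'n set"] unfolding n_def by (auto simp: lessThan_atLeast0)
  define ie where "ie = the_inv_into UNIV e"
  have ie_e: "ie (e k) = k" for k
    unfolding ie_def using e by (simp add: bij_betw_def the_inv_into_f_f)
  have e_lt: "e k < n" for k using e by (auto simp: bij_betw_def)
  define dd where "dd i = d $ ie i" for i
  define ell where "ell g = (\<integral>x. h x * g x \<partial>M)" for g
  have ex: "\<exists>f. (\<forall>i<n. square_integrable M (f i)) \<and> indep_ae M n f \<and>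
             (\<forall>i<n. (\<integral>x. h x * f i x \<partial>M) = dd i)"
  proof (cases "d = 0")
    case True
    then obtain g :: "nat \<Rightarrow> 'a \<Rightarrow> 'f" where sig: "\<forall>i<Suc n. square_integrable M (g i)"
      and ig: "indep_ae M (Suc n) g"
      using d0 unfolding L2_dim_ge_def indep_ae_def n_def by auto
    have "\<exists>g'. (\<forall>i<Suc n. square_integrable M (g' i)) \<and> indep_ae M (Suc n) g' \<and>
            (ell (g' n) = 0 \<longrightarrow> (\<forall>i<Suc n. ell (g' i) = 0))"
    proof (cases "\<exists>j<Suc n. ell (g j) \<noteq> 0")
      case True
      then obtain j where j: "j < Suc n" "ell (g j) \<noteq> 0" by blast
      define \<tau> where "\<tau> i = (if i = j then n else if i = n then j else i)" for i
      have b: "bij_betw \<tau> {..<Suc n} {..<Suc n}" unfolding \<tau>_def by (rule swap_bij) (use j in auto)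
      have "\<tau> i < Suc n" if "i < Suc n" for i using j that unfolding \<tau>_def by auto
      moreover have "\<tau> n = j" unfolding \<tau>_def by auto
      ultimately show ?thesis using indep_perm[OF b ig] sig j
        by (intro exI[of _ "\<lambda>i. g (\<tau> i)"]) auto
    next
      case False then show ?thesis using sig ig by blast
    qed
    then obtain g' where sig': "\<And>i. i<Suc n \<Longrightarrow> square_integrable M (g' i)"
      and ig': "indep_ae M (Suc n) g'" and piv: "ell (g' n) = 0 \<Longrightarrow> (\<forall>i<Suc n. ell (g' i) = 0)"
      by blast
    from constrB[OF sih sig' ig' piv[unfolded ell_def]]
    show ?thesis using True by (simp add: dd_def)
  next
    case False
    then obtain k where "d $ k \<noteq> 0" by (auto simp: vec_eq_iff)
    define p where "p = e k"
    have p: "p < n" "dd p \<noteq> 0" unfolding p_def dd_def using e_lt \<open>d $ k \<noteq> 0\<close> by (simp_all add: ie_e)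
    obtain g :: "nat \<Rightarrow> 'a \<Rightarrow> 'f" where sig: "\<forall>i<n. square_integrable M (g i)"
      and ig: "indep_ae M n g"
      using dne False unfolding L2_dim_ge_def indep_ae_def n_def by auto
    have "\<exists>g'. (\<forall>i<n. square_integrable M (g' i)) \<and> indep_ae M n g' \<and> ell (g' p) \<noteq> 0"
    proof (cases "\<exists>j<n. ell (g j) \<noteq> 0")
      case True
      then obtain j where j: "j < n" "ell (g j) \<noteq> 0" by blast
      define \<tau> where "\<tau> i = (if i = j then p else if i = p then j else i)" for i
      have b: "bij_betw \<tau> {..<n} {..<n}" unfolding \<tau>_def by (rule swap_bij) (use j p in auto)
      have "\<tau> i < n" if "i < n" for i using j p that unfolding \<tau>_def by auto
      moreover have "\<tau> p = j" unfolding \<tau>_def by auto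
      ultimately show ?thesis using indep_perm[OF b ig] sig j
        by (intro exI[of _ "\<lambda>i. g (\<tau> i)"]) auto
    next
      case False
      then have l0: "\<And>j. j < n \<Longrightarrow> ell (g j) = 0" by blast
      define N where "N = (\<integral>x. (norm (h x))\<^sup>2 \<partial>M)"
      have "N \<noteq> 0"
      proof
        assume "N = 0"
        then have "AE x in M. (norm (h x))\<^sup>2 = 0"
          unfolding N_def using integral_nonneg_eq_0_iff_AE[OF si_int[OF sih]] by simp
        then have "AE x in M. h x = 0" by simp
        then show False using hn by simp
      qed
      define u where "u x = inverse (of_real N) * cj (h x)" for x
      have siu: "square_integrable M u" unfolding u_def by (intro si_cmult si_cj sih)
      have "ell u = inverse (of_real N) * (\<integral>x. h x * cj (h x) \<partial>M)"
        unfolding ell_def u_def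
        by (subst mult.left_commute) (rule integral_mult_right_zero)
      also have "(\<integral>x. h x * cj (h x) \<partial>M) = (of_real N :: 'f)"
        unfolding N_def cj_self by (rule integral_of_real) (rule si_int[OF sih])
      finally have lu: "ell u = 1" using \<open>N \<noteq> 0\<close> by simp
      define g' where "g' i = (if i = p then u else g i)" for i
      have sig': "square_integrable M (g' i)" if "i < n" for i
        unfolding g'_def using sig siu that by auto
      have ig': "indep_ae M n g'" unfolding indep_ae_def
      proof (rule allI, rule impI)
        fix c assume ae: "AE x in M. (\<Sum>i<n. c i * g' i x) = 0"
        have "ell (\<lambda>x. \<Sum>i<n. c i * g' i x) = ell (\<lambda>x. 0)"
          unfolding ell_def
        proof (rule integral_cong_AE)
          show "(\<lambda>x. h x * (\<Sum>i<n. c i * g' i x)) \<in> borel_measurable M"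
          proof -
            have "square_integrable M (\<lambda>x. \<Sum>i<n. c i * g' i x)"
              by (rule si_sum, rule si_cmult, rule sig') simp
            then show ?thesis using si_prod_int[OF sih] by auto
          qed
          show "(\<lambda>x. h x * 0) \<in> borel_measurable M" by simp
          show "AE x in M. h x * (\<Sum>i<n. c i * g' i x) = h x * 0" using ae by auto
        qed
        moreover have "ell (\<lambda>x. \<Sum>i<n. c i * g' i x) = (\<Sum>i<n. c i * ell (g' i))"
          unfolding ell_def by (rule ell_sum[OF sih sig']) simp
        moreover have "(\<Sum>i<n. c i * ell (g' i)) = (\<Sum>i<n. if i = p then c p else 0)"
          by (rule sum.cong) (auto simp: g'_def lu l0)
        ultimately have cp: "c p = 0" using p by (simp add: ell_def)
        have "(\<Sum>i<n. c i * g' i x) = (\<Sum>i<n. (c(p := 0)) i * g i x)" for x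
          by (rule sum.cong) (auto simp: g'_def cp)
        then have "AE x in M. (\<Sum>i<n. (c(p := 0)) i * g i x) = 0" using ae by simp
        then have "\<forall>i<n. (c(p := 0)) i = 0" using ig unfolding indep_ae_def by blast
        then show "\<forall>i<n. c i = 0" using cp by (metis fun_upd_apply)
      qed
      show ?thesis using sig' ig' lu by (intro exI[of _ g']) (auto simp: g'_def)
    qed
    then obtain g' where sig': "\<And>i. i<n \<Longrightarrow> square_integrable M (g' i)"
      and ig': "indep_ae M n g'" and piv: "ell (g' p) \<noteq> 0"
      by blast
    show ?thesis using constrA[where d=dd, OF sih sig' ig' p(1) piv[unfolded ell_def] p(2)] .
  qed
  then obtain f where sif: "\<And>i. i<n \<Longrightarrow> square_integrable M (f i)" and indf: "indep_ae M n f"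
    and lf: "\<And>i. i<n \<Longrightarrow> (\<integral>x. h x * f i x \<partial>M) = dd i" by blast
  define \<Phi> where "\<Phi> x = (\<chi> k. f (e k) x)" for x
  have fr: "cont_frame cj M \<Phi>"
  proof (rule frame)
    show "square_integrable M (\<lambda>x. \<Phi> x $ k)" for k unfolding \<Phi>_def using sif e_lt by simp
    fix c :: "'f^'n"
    assume ae: "AE x in M. (\<Sum>k\<in>UNIV. c $ k * \<Phi> x $ k) = 0"
    have "(\<Sum>k\<in>UNIV. c $ k * \<Phi> x $ k) = (\<Sum>i<n. c $ ie i * f i x)" for x
      unfolding \<Phi>_def using sum.reindex_bij_betw[OF e, of "\<lambda>i. c $ ie i * f i x"] by (simp add: ie_e)
    then have "\<forall>i<n. c $ ie i = 0" using indf ae unfolding indep_ae_def by auto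
    then show "c = 0" using e_lt ie_e by (metis vec_eq_iff zero_index)
  qed
  have "synth_op M h \<Phi> = d"
    unfolding synth_op_def \<Phi>_def using lf e_lt by (simp add: vec_eq_iff dd_def ie_e)
  then show ?thesis using fr by blast
qed

end

interpretation rconj: conjf "\<lambda>z::real. z"
  by unfold_locales (simp_all add: power2_eq_square)

interpretation cconj: conjf cnj
  by unfold_locales (simp_all add: complex_norm_square[symmetric] complex_cnj_scaleR)

theorem corollary5p6:
  fixes M :: "'a measure"
    and hr :: "'a \<Rightarrow> real" and dr :: "real ^ 'n::finite"
    and hc :: "'a \<Rightarrow> complex" and dc :: "complex ^ 'n::finite"
  shows
   "(square_integrable M hr \<and> \<not> (AE x in M. hr x = 0) \<and>
     (dr \<noteq> 0 \<longrightarrow> L2_dim_ge M TYPE(real) CARD('n)) \<and>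
     (dr = 0 \<longrightarrow> L2_dim_ge M TYPE(real) (CARD('n) + 1))
     \<longrightarrow> (\<exists>\<Phi> :: 'a \<Rightarrow> real ^ 'n. cont_frame (\<lambda>z. z) M \<Phi> \<and> synth_op M hr \<Phi> = dr))
    \<and>
    (square_integrable M hc \<and> \<not> (AE x in M. hc x = 0) \<and>
     (dc \<noteq> 0 \<longrightarrow> L2_dim_ge M TYPE(complex) CARD('n)) \<and>
     (dc = 0 \<longrightarrow> L2_dim_ge M TYPE(complex) (CARD('n) + 1))
     \<longrightarrow> (\<exists>\<Phi> :: 'a \<Rightarrow> complex ^ 'n. cont_frame cnj M \<Phi> \<and> synth_op M hc \<Phi> = dc))"
  using rconj.main[of M hr dr] cconj.main[of M hc dc] by blast

end
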